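(* Let $\kappa$ be an ordinal of uncountable cofinality and let $Z$, $Z_Y$, $D^\gamma_\alpha$ be as described in the context. Let $\alpha, \beta \in [2,\kappa)$, let $u: \beta \to \alpha$ be a morphism in $Z$, and let $2 \leq \gamma \leq \min(\alpha, \beta)$. Then $u$ lies in $Z_Y$ and does not pass through any vertex less than $\gamma$ if and only if $D^\gamma_\alpha(a) = u\, D^\gamma_\beta(a)\, u^{-1}$ in $Z$ for all $a \in G_\gamma$.
   Context: For an ordinal $\alpha \ge 2$ let $G_\alpha$ be the free group on the set $\alpha$ (i.e. on $\alpha$ generators indexed by the ordinals below $\alpha$); for $\gamma \le \alpha$ let $D^\gamma_\alpha: G_\gamma \to G_\alpha$ be the natural inclusion. Let $Z$ be the groupoid with object set $[2,\kappa)$ generated by: the elements of $G_\alpha$ as automorphisms of the object $\alpha$, for each $\alpha$; and, for each pair $\alpha \neq \beta$ in $[2,\kappa)$, a morphism $y^\beta_\alpha: \beta \to \alpha$; subject to the relations of each group $G_\alpha$ and the relations $y^\beta_\alpha \, D^{\varepsilon}_\beta(a)\, y^\alpha_\beta = D^{\varepsilon}_\alpha(a)$ for all $a \in G_\varepsilon$, where $\varepsilon = \min(\alpha,\beta)$ (in particular $y^\alpha_\beta = (y^\beta_\alpha)^{-1}$). Equivalently, $Z$ is the fundamental groupoid of the graph of groups with vertices $[2,\kappa)$, vertex groups $G_\alpha$, edges $y^\beta_\alpha$ with involution $y^\beta_\alpha \mapsto y^\alpha_\beta$, edge groups $G_{\min(\alpha,\beta)}$ and edge monomorphisms the inclusions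 into the source vertex group. Elements of $G_\alpha$ are regarded as morphisms of $Z$. $Z_Y$ is the subgroupoid of $Z$ generated by the edges $y^\beta_\alpha$; every morphism of $Z_Y$ can be uniquely written as a reduced word in the generators $y^\beta_\alpha$ (with $y^\alpha_\beta$ the inverse of $y^\beta_\alpha$). A morphism of $Z_Y$ passes through a vertex $\delta$ if this reduced word involves a generator with source or target $\delta$; the identity $\mathrm{id}_\delta$ passes through $\delta$ and no other vertex. *)

theory Defs
  imports Main "HOL-Library.Countable_Set"
begin

text \<open>Ordinals below kappa are modelled by the elements of a well-ordered type 'o
  (so the type 'o itself plays the role of kappa = [0,kappa)).\<close>

definition uncountable_cofinality :: "'o::wellorder set \<Rightarrow> bool" where
  "uncountable_cofinality K \<longleftrightarrow>
     (\<forall>S. S \<subseteq> K \<longrightarrow> countable S \<longrightarrow> (\<exists>x\<in>K. \<forall>s\<in>S. s < x))"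

definition ge2 :: "'o::wellorder \<Rightarrow> bool" where
  "ge2 v \<longleftrightarrow> (\<exists>a b. a < b \<and> b < v)"

text \<open>Gen v i b : the generator i (i < v) of G_v (inverted if b), an automorphism of v.
  Edge t s  : the edge y^s_t : s \<rightarrow> t.
  Words are read in composition order: the rightmost letter is applied first.\<close>
datatype 'o zletter = Gen 'o 'o bool | Edge 'o 'o

fun zpath :: "'o::wellorder \<Rightarrow> 'o \<Rightarrow> 'o zletter list \<Rightarrow> bool" where
  "zpath s t [] \<longleftrightarrow> s = t \<and> ge2 s"
| "zpath s t (Gen v i b # w) \<longleftrightarrow> v = t \<and> ge2 v \<and> i < v \<and> zpath s v w"
| "zpath s t (Edge t' s' # w) \<longleftrightarrow> t' = t \<and> ge2 t' \<and> ge2 s' \<and> s' \<noteq> t' \<and> zpath s s' w"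

text \<open>Words of the free group G_g: lists of generators (index, inverted) with index < g.\<close>
definition gword :: "'o::wellorder \<Rightarrow> ('o \<times> bool) list \<Rightarrow> bool" where
  "gword g a \<longleftrightarrow> (\<forall>(i,b)\<in>set a. i < g)"

text \<open>D_v(a): the element a of some G_g (g \<le> v) regarded as an automorphism of v.\<close>
definition D :: "'o \<Rightarrow> ('o \<times> bool) list \<Rightarrow> 'o zletter list" where
  "D v a = map (\<lambda>(i,b). Gen v i b) a"

fun zinv_letter :: "'o zletter \<Rightarrow> 'o zletter" where
  "zinv_letter (Gen v i b) = Gen v i (\<not> b)"
| "zinv_letter (Edge t s) = Edge s t"

definition zinv :: "'o zletter list \<Rightarrow> 'o zletter list" where
  "zinv w = rev (map zinv_letter w)"

text \<open>Equality of morphisms s \<rightarrow> t in Z: the congruence generated by the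
  defining relations of the presentation.\<close>
inductive zeq :: "'o::wellorder \<Rightarrow> 'o \<Rightarrow> 'o zletter list \<Rightarrow> 'o zletter list \<Rightarrow> bool" where
  zrefl: "zpath s t w \<Longrightarrow> zeq s t w w"
| zsym: "zeq s t w1 w2 \<Longrightarrow> zeq s t w2 w1"
| ztrans: "zeq s t w1 w2 \<Longrightarrow> zeq s t w2 w3 \<Longrightarrow> zeq s t w1 w3"
| zctx: "zeq s t w1 w2 \<Longrightarrow> zpath t t' x \<Longrightarrow> zpath s' s y \<Longrightarrow> zeq s' t' (x @ w1 @ y) (x @ w2 @ y)"
| zfree: "ge2 v \<Longrightarrow> i < v \<Longrightarrow> zeq v v [Gen v i b, Gen v i (\<not> b)] []"
| zedge: "ge2 \<alpha> \<Longrightarrow> ge2 \<beta> \<Longrightarrow> \<alpha> \<noteq> \<beta> \<Longrightarrow> gword (min \<alpha> \<beta>) a \<Longrightarrow>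
          zeq \<alpha> \<alpha> ([Edge \<alpha> \<beta>] @ D \<beta> a @ [Edge \<beta> \<alpha>]) (D \<alpha> a)"

definition edge_word :: "'o zletter list \<Rightarrow> bool" where
  "edge_word w \<longleftrightarrow> (\<forall>l\<in>set w. \<exists>t s. l = Edge t s)"

definition freely_reduced :: "'o zletter list \<Rightarrow> bool" where
  "freely_reduced w \<longleftrightarrow> (\<forall>i. Suc i < length w \<longrightarrow> w ! i \<noteq> zinv_letter (w ! Suc i))"

text \<open>Vertices a word of Z_Y passes through; the empty word at vertex s is id_s.\<close>
definition passes_through :: "'o \<Rightarrow> 'o zletter list \<Rightarrow> 'o \<Rightarrow> bool" where
  "passes_through s w d \<longleftrightarrow> (w = [] \<and> d = s) \<or> (\<exists>t s'. Edge t s' \<in> set w \<and> (d = t \<or> d = s'))"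

end

theory Submission
  imports Defs
begin

lemma zpath_ge2: "zpath s t w \<Longrightarrow> ge2 s \<and> ge2 t"
  by (induction s t w rule: zpath.induct) auto

lemma zpath_append: "zpath s t (x @ y) \<longleftrightarrow> (\<exists>m. zpath m t x \<and> zpath s m y)"
proof (induction x arbitrary: t)
  case Nil then show ?case using zpath_ge2 by auto
next
  case (Cons l x) then show ?case by (cases l) auto
qed

lemma zpath_D: "zpath s t (D t a @ w) \<longleftrightarrow> gword t a \<and> zpath s t w"
  by (induction a) (auto simp: D_def gword_def dest: zpath_ge2)

lemma zpath_D1: "zpath s t (D t a) \<longleftrightarrow> gword t a \<and> s = t \<and> ge2 t"
  using zpath_D[of s t a "[]"] by auto

lemma zeq_zpath: "zeq s t w1 w2 \<Longrightarrow> zpath s t w1 \<and> zpath s t w2"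
proof (induction rule: zeq.induct)
  case (zctx s t w1 w2 t' x s' y)
  then show ?case by (auto simp: zpath_append)
next
  case (zedge \<alpha> \<beta> a)
  have "gword \<beta> a" "gword \<alpha> a" using zedge by (auto simp: gword_def)
  then show ?case using zedge by (auto simp: zpath_D zpath_D1)
qed auto

lemma zctx': "zeq s t w1 w2 \<Longrightarrow> zpath t t' x \<Longrightarrow> zpath s' s y \<Longrightarrow> W1 = x @ w1 @ y \<Longrightarrow> W2 = x @ w2 @ y \<Longrightarrow> zeq s' t' W1 W2"
  using zctx by blast

lemma zrefl0: "ge2 s \<Longrightarrow> zpath s s []" by simp

lemma zinv_path: "zpath s t w \<Longrightarrow> zpath t s (zinv w)"
proof (induction s t w rule: zpath.induct)
  case (1 s t) then show ?case by (auto simp: zinv_def)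
next
  case (2 s t v i b w) then show ?case by (auto simp: zinv_def zpath_append)
next
  case (3 s t t' s' w) then show ?case by (auto simp: zinv_def zpath_append)
qed

lemma zinv_append[simp]: "zinv (x @ y) = zinv y @ zinv x" by (simp add: zinv_def)
lemma zinv_Cons: "zinv (l # y) = zinv y @ [zinv_letter l]" by (simp add: zinv_def)
lemma zinv_Nil[simp]: "zinv [] = []" by (simp add: zinv_def)

definition ainv :: "('o \<times> bool) list \<Rightarrow> ('o \<times> bool) list" where
  "ainv a = rev (map (\<lambda>(i,b). (i, \<not> b)) a)"

lemma zinv_D: "zinv (D v a) = D v (ainv a)"
  by (induction a) (auto simp: zinv_def D_def ainv_def)

lemma gword_ainv: "gword g a \<Longrightarrow> gword g (ainv a)"
  by (auto simp: gword_def ainv_def)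

lemma zeq_zinv: "zeq s t w1 w2 \<Longrightarrow> zeq t s (zinv w1) (zinv w2)"
proof (induction rule: zeq.induct)
  case (zrefl s t w) then show ?case by (simp add: zeq.zrefl zinv_path)
next
  case (zsym s t w1 w2) then show ?case by (simp add: zeq.zsym)
next
  case (ztrans s t w1 w2 w3) then show ?case by (meson zeq.ztrans)
next
  case (zctx s t w1 w2 t' x s' y)
  show ?case by (rule zctx'[OF zctx(4)]) (auto simp: zinv_path zctx)
next
  case (zfree v i b)
  then show ?case using zeq.zfree[of v i b] by (simp add: zinv_def)
next
  case (zedge \<alpha> \<beta> a)
  have "zeq \<alpha> \<alpha> ([Edge \<alpha> \<beta>] @ D \<beta> (ainv a) @ [Edge \<beta> \<alpha>]) (D \<alpha> (ainv a))"
    using zedge by (intro zeq.zedge) (auto simp: gword_ainv)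
  then show ?case by (simp add: zinv_def zinv_D[unfolded zinv_def])
qed

lemma zeq_inv_cancel1: "zpath s t [l] \<Longrightarrow> zeq s s [zinv_letter l, l] []"
proof (cases l)
  case (Gen v i b)
  assume "zpath s t [l]"
  then show ?thesis using zeq.zfree[of v i "\<not> b"] Gen by auto
next
  case (Edge t' s')
  assume "zpath s t [l]"
  then show ?thesis using zeq.zedge[of s' t' "[]"] Edge by (auto simp: D_def gword_def)
qed

lemma zeq_inv_cancel: "zpath s t u \<Longrightarrow> zeq s s (zinv u @ u) []"
proof (induction u arbitrary: t)
  case Nil then show ?case using zpath_ge2 by (auto intro: zeq.zrefl)
next
  case (Cons l u)
  then obtain m where m: "zpath m t [l]" "zpath s m u" using zpath_append[of s t "[l]" u] by auto
  have ih: "zeq s s (zinv u @ u) []" using Cons m by auto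
  have "zeq s s (zinv u @ [zinv_letter l, l] @ u) (zinv u @ [] @ u)"
    by (rule zctx'[OF zeq_inv_cancel1[OF m(1)]]) (auto simp: zinv_path m)
  then show ?case using ih by (auto simp: zinv_Cons intro: zeq.ztrans)
qed

definition ginv :: "'o \<times> bool \<Rightarrow> 'o \<times> bool" where "ginv p = (fst p, \<not> snd p)"

fun cr :: "'o \<times> bool \<Rightarrow> ('o \<times> bool) list \<Rightarrow> ('o \<times> bool) list" where
  "cr p [] = [p]"
| "cr p (q # g) = (if q = ginv p then g else p # q # g)"

fun reduced :: "('o \<times> bool) list \<Rightarrow> bool" where
  "reduced [] = True"
| "reduced [p] = True"
| "reduced (p # q # g) = (q \<noteq> ginv p \<and> reduced (q # g))"

lemma ginv_ginv[simp]: "ginv (ginv p) = p" by (simp add: ginv_def)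
lemma fst_ginv[simp]: "fst (ginv p) = fst p" by (simp add: ginv_def)

lemma reduced_tl: "reduced (p # g) \<Longrightarrow> reduced g"
  by (cases g) auto

lemma cr_reduced: "reduced g \<Longrightarrow> reduced (cr p g)"
  by (cases g) (auto intro: reduced_tl)

lemma cr_cancel: "reduced g \<Longrightarrow> cr p (cr (ginv p) g) = g"
proof (cases g)
  case (Cons q g')
  assume r: "reduced g"
  show ?thesis
  proof (cases "q = p")
    case True
    then show ?thesis using Cons r by (cases g') auto
  next
    case False
    then show ?thesis using Cons by (auto simp: ginv_def)
  qed
qed auto

lemma reduced_takeWhile: "reduced g \<Longrightarrow> reduced (takeWhile P g)"
  by (induction g rule: reduced.induct) auto

lemma reduced_dropWhile: "reduced g \<Longrightarrow> reduced (dropWhile P g)"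
  by (induction g rule: reduced.induct) (auto intro: reduced_tl)

lemma reduced_append: "reduced g \<Longrightarrow> reduced h \<Longrightarrow> (g \<noteq> [] \<Longrightarrow> h \<noteq> [] \<Longrightarrow> hd h \<noteq> ginv (last g)) \<Longrightarrow> reduced (g @ h)"
  by (induction g rule: reduced.induct) (auto, (cases h; auto))

type_synonym 'o nf = "('o \<times> bool) list \<times> ('o \<times> ('o \<times> bool) list) list"

fun vs :: "'o::wellorder \<Rightarrow> ('o \<times> ('o \<times> bool) list) list \<Rightarrow> bool" where
  "vs t [] = True"
| "vs t ((v, g) # rest) = (reduced g \<and> gword v g \<and> (g \<noteq> [] \<longrightarrow> min t v \<le> fst (hd g))
      \<and> (g = [] \<longrightarrow> rest = [] \<or> fst (hd rest) \<noteq> t) \<and> vs v rest)"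

definition valid :: "'o::wellorder \<Rightarrow> 'o nf \<Rightarrow> bool" where
  "valid t N \<longleftrightarrow> reduced (fst N) \<and> gword t (fst N) \<and> vs t (snd N)"

fun act_letter :: "'o::wellorder zletter \<Rightarrow> 'o nf \<Rightarrow> 'o nf" where
  "act_letter (Gen v i b) (g0, segs) = (cr (i, b) g0, segs)"
| "act_letter (Edge t' t) (g0, segs) =
    (if dropWhile (\<lambda>p. fst p < min t' t) g0 = [] \<and> segs \<noteq> [] \<and> fst (hd segs) = t'
     then (g0 @ snd (hd segs), tl segs)
     else (takeWhile (\<lambda>p. fst p < min t' t) g0, (t, dropWhile (\<lambda>p. fst p < min t' t) g0) # segs))"

definition act :: "'o::wellorder zletter list \<Rightarrow> 'o nf \<Rightarrow> 'o nf" where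
  "act w N = foldr act_letter w N"

lemma act_Nil[simp]: "act [] N = N" by (simp add: act_def)
lemma act_Cons[simp]: "act (l # w) N = act_letter l (act w N)" by (simp add: act_def)
lemma act_append[simp]: "act (x @ y) N = act x (act y N)" by (simp add: act_def)

lemma act_D: "act (D v a) (g, s) = (foldr cr a g, s)"
  by (induction a) (auto simp: D_def)

lemma gword_cr: "gword t g \<Longrightarrow> fst p < t \<Longrightarrow> gword t (cr p g)"
  by (cases g) (auto simp: gword_def)

lemma set_takeWhileD': "x \<in> set (takeWhile P xs) \<Longrightarrow> P x"
  by (induction xs) (auto split: if_splits)

lemma hd_dropWhile': "dropWhile P xs \<noteq> [] \<Longrightarrow> \<not> P (hd (dropWhile P xs))"
  by (induction xs) auto

lemma last_takeWhile_P: "takeWhile P xs \<noteq> [] \<Longrightarrow> P (last (takeWhile P xs))"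
  using set_takeWhileD' last_in_set by metis

lemma valid_act_letter:
  assumes "zpath s t [l]" "valid s N"
  shows "valid t (act_letter l N)"
proof (cases l)
  case (Gen v i b)
  obtain g0 segs where N: "N = (g0, segs)" by force
  show ?thesis using assms Gen N by (auto simp: valid_def cr_reduced gword_cr)
next
  case (Edge t' s')
  obtain g0 segs where N: "N = (g0, segs)" by force
  have st: "t' = t" "s' = s" using assms Edge by auto
  define P where "P = (\<lambda>p::'a \<times> bool. fst p < min t s)"
  have r0: "reduced g0" "gword s g0" "vs s segs" using assms N by (auto simp: valid_def)
  show ?thesis
  proof (cases "dropWhile P g0 = [] \<and> segs \<noteq> [] \<and> fst (hd segs) = t")
    case True
    then obtain g1 rest where sg: "segs = (t, g1) # rest" by (cases segs) auto
    have allP: "\<forall>p\<in>set g0. P p" using True by (simp add: dropWhile_eq_Nil_conv)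
    have v1: "reduced g1" "gword t g1" "g1 \<noteq> [] \<longrightarrow> min s t \<le> fst (hd g1)" "vs t rest"
      using r0 sg by auto
    have "reduced (g0 @ g1)"
    proof (rule reduced_append[OF r0(1) v1(1)])
      assume "g0 \<noteq> []" "g1 \<noteq> []"
      then have "P (last g0)" using allP by auto
      then show "hd g1 \<noteq> ginv (last g0)" using v1(3) \<open>g1 \<noteq> []\<close> unfolding P_def
        by (metis fst_ginv min.commute not_le)
    qed
    moreover have "gword t (g0 @ g1)" using allP v1(2) unfolding gword_def P_def by auto
    ultimately show ?thesis using True N Edge st sg v1 by (auto simp: valid_def P_def)
  next
    case False
    have "reduced (takeWhile P g0)" "reduced (dropWhile P g0)"
      using r0 by (auto simp: reduced_takeWhile reduced_dropWhile)
    moreover have "gword t (takeWhile P g0)"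
      unfolding gword_def P_def using set_takeWhileD' by fastforce
    moreover have "gword s (dropWhile P g0)" using r0(2) set_dropWhileD unfolding gword_def by fastforce
    moreover have "dropWhile P g0 \<noteq> [] \<longrightarrow> min t s \<le> fst (hd (dropWhile P g0))"
      using hd_dropWhile'[of P g0] unfolding P_def by (simp add: not_less min_le_iff_disj)
    moreover have eq: "act_letter l N = (takeWhile P g0, (s, dropWhile P g0) # segs)"
      using False N Edge st unfolding P_def by auto
    moreover have "dropWhile P g0 = [] \<longrightarrow> segs = [] \<or> fst (hd segs) \<noteq> t" using False by auto
    ultimately show ?thesis using r0 by (simp add: valid_def)
  qed
qed

lemma valid_act: "zpath s t w \<Longrightarrow> valid s N \<Longrightarrow> valid t (act w N)"
proof (induction w arbitrary: t)
  case (Cons l w)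
  then obtain m where m: "zpath m t [l]" "zpath s m w" using zpath_append[of s t "[l]" w] by auto
  have "valid m (act w N)" using Cons.IH m(2) Cons.prems(2) by blast
  then show ?case using valid_act_letter[OF m(1)] by simp
qed auto

lemma foldr_cr_app:
  assumes "\<forall>p\<in>set a. fst p < m" "\<forall>p\<in>set h. fst p < m" "r = [] \<or> \<not> fst (hd r) < m"
  shows "foldr cr a (h @ r) = foldr cr a h @ r \<and> (\<forall>p\<in>set (foldr cr a h). fst p < m)"
  using assms(1)
proof (induction a)
  case Nil then show ?case using assms by simp
next
  case (Cons p a)
  then have ih: "foldr cr a (h @ r) = foldr cr a h @ r" "\<forall>q\<in>set (foldr cr a h). fst q < m"
    and pm: "fst p < m" by auto
  show ?case
  proof (cases "foldr cr a h")
    case Nil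
    then show ?thesis using ih pm assms(3) by (cases r) (auto simp: ginv_def)
  next
    case (Cons q X)
    then show ?thesis using ih pm by auto
  qed
qed

lemma act_zedge:
  assumes v: "valid \<alpha> N" and a: "gword (min \<alpha> \<beta>) a"
  shows "act ([Edge \<alpha> \<beta>] @ D \<beta> a @ [Edge \<beta> \<alpha>]) N = act (D \<alpha> a) N"
proof -
  obtain g0 segs where N: "N = (g0, segs)" by force
  define m where "m = min \<alpha> \<beta>"
  have mm: "min \<beta> \<alpha> = m" by (simp add: m_def min.commute)
  define P where "P = (\<lambda>p::'a \<times> bool. fst p < m)"
  have aP: "\<forall>p\<in>set a. fst p < m" using a by (auto simp: gword_def m_def)
  have r0: "reduced g0" "vs \<alpha> segs" using v N by (auto simp: valid_def)
  show ?thesis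
  proof (cases "dropWhile P g0 = [] \<and> segs \<noteq> [] \<and> fst (hd segs) = \<beta>")
    case True
    then obtain g1 rest where sg: "segs = (\<beta>, g1) # rest" by (cases segs) auto
    have allP: "\<forall>p\<in>set g0. fst p < m" using True by (simp add: dropWhile_eq_Nil_conv P_def)
    have g1: "g1 = [] \<or> \<not> fst (hd g1) < m" using r0 sg by (auto simp: m_def not_less min_le_iff_disj)
    have g1r: "g1 = [] \<longrightarrow> rest = [] \<or> fst (hd rest) \<noteq> \<alpha>" using r0 sg by auto
    have e1: "act_letter (Edge \<beta> \<alpha>) N = (g0 @ g1, rest)"
      using True sg N by (simp add: mm P_def)
    obtain K where K: "foldr cr a (g0 @ g1) = K @ g1" "\<forall>p\<in>set K. fst p < m" "K = foldr cr a g0"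
      using foldr_cr_app[OF aP allP g1] by auto
    have tw: "takeWhile P (K @ g1) = K" using K(2) g1 by (cases g1) (auto simp: P_def)
    have dw: "dropWhile P (K @ g1) = g1" using K(2) g1 by (cases g1) (auto simp: P_def)
    have "act ([Edge \<alpha> \<beta>] @ D \<beta> a @ [Edge \<beta> \<alpha>]) N = act_letter (Edge \<alpha> \<beta>) (K @ g1, rest)"
      using e1 K(1) by (simp add: act_D)
    also have "\<dots> = (K, (\<beta>, g1) # rest)"
      using tw dw g1r by (auto simp: P_def m_def)
    also have "\<dots> = act (D \<alpha> a) N" using N sg K(3) by (simp add: act_D)
    finally show ?thesis .
  next
    case False
    have e1: "act_letter (Edge \<beta> \<alpha>) N = (takeWhile P g0, (\<alpha>, dropWhile P g0) # segs)"
      using False N by (auto simp: mm P_def)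
    have tP: "\<forall>p\<in>set (takeWhile P g0). fst p < m" using set_takeWhileD' P_def by fastforce
    have dP: "dropWhile P g0 = [] \<or> \<not> fst (hd (dropWhile P g0)) < m"
      using hd_dropWhile'[of P g0] P_def by auto
    obtain K where K: "foldr cr a (takeWhile P g0 @ dropWhile P g0) = K @ dropWhile P g0"
      "\<forall>p\<in>set K. fst p < m" "K = foldr cr a (takeWhile P g0)"
      using foldr_cr_app[OF aP tP dP] by auto
    have dK: "dropWhile P K = []" using K(2) by (simp add: dropWhile_eq_Nil_conv P_def)
    have "act ([Edge \<alpha> \<beta>] @ D \<beta> a @ [Edge \<beta> \<alpha>]) N = act_letter (Edge \<alpha> \<beta>) (K, (\<alpha>, dropWhile P g0) # segs)"
      using e1 K(3) by (simp add: act_D)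
    also have "\<dots> = (K @ dropWhile P g0, segs)"
      using dK by (simp add: P_def m_def)
    also have "\<dots> = act (D \<alpha> a) N" using N K(1) by (simp add: act_D)
    finally show ?thesis .
  qed
qed

lemma zeq_act: "zeq s t w1 w2 \<Longrightarrow> valid s N \<Longrightarrow> act w1 N = act w2 N"
proof (induction arbitrary: N rule: zeq.induct)
  case (zctx s t w1 w2 t' x s' y)
  have "valid s (act y N)" using valid_act zctx by blast
  then show ?case using zctx by simp
next
  case (zfree v i b)
  obtain g0 segs where N: "N = (g0, segs)" by force
  have "cr (i, b) (cr (ginv (i, b)) g0) = g0" using zfree N by (intro cr_cancel) (auto simp: valid_def)
  then show ?case using N by (simp add: ginv_def)
next
  case (zedge \<alpha> \<beta> a)
  then show ?case using act_zedge by blast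
qed auto

fun segword :: "'o \<Rightarrow> ('o \<times> ('o \<times> bool) list) list \<Rightarrow> 'o zletter list" where
  "segword t [] = []"
| "segword t ((v, g) # rest) = Edge t v # D v g @ segword v rest"

definition nfword :: "'o \<Rightarrow> 'o nf \<Rightarrow> 'o zletter list" where
  "nfword t N = D t (fst N) @ segword t (snd N)"

lemma D_append[simp]: "D v (a @ b) = D v a @ D v b" by (simp add: D_def)
lemma D_Cons[simp]: "D v (p # a) = Gen v (fst p) (snd p) # D v a" by (simp add: D_def split: prod.split)
lemma D_Nil[simp]: "D v [] = []" by (simp add: D_def)

lemma zeq_edge_comm:
  assumes "ge2 t" "ge2 t'" "t \<noteq> t'" "gword (min t t') h"
  shows "zeq t' t ([Edge t t'] @ D t' h) (D t h @ [Edge t t'])"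
proof -
  have h': "gword t' h" "gword t h" using assms(4) by (auto simp: gword_def)
  have e: "zpath t' t [Edge t t']" using assms by auto
  have 1: "zeq t t ([Edge t t'] @ D t' h @ [Edge t' t]) (D t h)"
    using assms by (intro zeq.zedge) auto
  have 2: "zeq t' t ([Edge t t'] @ D t' h @ [Edge t' t] @ [Edge t t']) (D t h @ [Edge t t'])"
    by (rule zctx'[OF 1 _ e]) (auto simp: assms)
  have 3: "zeq t' t' ([Edge t' t] @ [] @ [Edge t t']) (D t' [])"
    using assms zeq.zedge[of t' t "[]"] by (auto simp: gword_def)
  have 4: "zeq t' t ([Edge t t'] @ D t' h @ [Edge t' t, Edge t t']) ([Edge t t'] @ D t' h)"
    by (rule zctx'[OF 3, where x="[Edge t t'] @ D t' h" and y="[]"]) (use assms h' in \<open>auto simp: zpath_D zpath_D1\<close>)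
  show ?thesis using 2 4 by (auto intro: zeq.ztrans zeq.zsym)
qed

lemma nf_letter:
  assumes v: "valid t' N" and p: "zpath s t' (nfword t' N)" and l: "zpath t' t [l]"
  shows "zeq s t (l # nfword t' N) (nfword t (act_letter l N))"
proof -
  obtain g0 segs where N: "N = (g0, segs)" by force
  define S where "S = segword t' segs"
  have pS: "zpath s t' S" "gword t' g0" using p N by (auto simp: nfword_def zpath_D S_def)
  have r0: "reduced g0" "vs t' segs" using v N by (auto simp: valid_def)
  show ?thesis
  proof (cases l)
    case (Gen v i b)
    have vt: "v = t'" "t = t'" "ge2 t'" "i < t'" using l Gen by auto
    show ?thesis
    proof (cases "g0 \<noteq> [] \<and> hd g0 = (i, \<not> b)")
      case True
      then obtain g0' where g0: "g0 = (i, \<not> b) # g0'" by (cases g0) auto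
      have "zeq s t' ([] @ [Gen t' i b, Gen t' i (\<not> b)] @ (D t' g0' @ S)) ([] @ [] @ (D t' g0' @ S))"
        by (rule zctx'[OF zeq.zfree[of t' i b], where x="[]" and y="D t' g0' @ S"]) (use vt pS g0 in \<open>auto simp: zpath_D gword_def\<close>)
      then show ?thesis using N g0 vt Gen by (simp add: nfword_def S_def ginv_def)
    next
      case False
      have "act_letter l N = ((i, b) # g0, segs)" using False N Gen
        by (cases g0) (auto simp: ginv_def)
      moreover have "zpath s t (l # nfword t' N)" using l p zpath_append[of s t "[l]"] by auto
      ultimately show ?thesis using Gen vt N by (auto simp: nfword_def intro: zeq.zrefl)
    qed
  next
    case (Edge t1 t2)
    have vt: "t1 = t" "t2 = t'" "ge2 t" "ge2 t'" "t \<noteq> t'" using l Edge by auto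
    define P where "P = (\<lambda>p::'a \<times> bool. fst p < min t t')"
    show ?thesis
    proof (cases "dropWhile P g0 = [] \<and> segs \<noteq> [] \<and> fst (hd segs) = t")
      case True
      then obtain g1 rest where sg: "segs = (t, g1) # rest" by (cases segs) auto
      have allP: "gword (min t t') g0" using True by (auto simp: dropWhile_eq_Nil_conv P_def gword_def)
      have e1: "act_letter l N = (g0 @ g1, rest)" using True sg N Edge vt by (simp add: P_def)
      have py: "zpath s t (D t g1 @ segword t rest)" using pS sg by (simp add: S_def)
      have "zeq s t ([Edge t t'] @ D t' g0 @ [Edge t' t] @ (D t g1 @ segword t rest)) ([] @ D t g0 @ (D t g1 @ segword t rest))"
        by (rule zctx'[OF zeq.zedge _ py]) (use vt allP in auto)
      then show ?thesis using e1 N sg Edge vt by (simp add: nfword_def)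
    next
      case False
      have e1: "act_letter l N = (takeWhile P g0, (t', dropWhile P g0) # segs)"
        using False N Edge vt by (auto simp: P_def)
      have tP: "gword (min t t') (takeWhile P g0)" using set_takeWhileD' P_def gword_def by fastforce
      have pg: "gword t' (dropWhile P g0)" using pS(2) set_dropWhileD unfolding gword_def by fastforce
      have py: "zpath s t' (D t' (dropWhile P g0) @ S)" using pS pg by (simp add: zpath_D)
      have "zeq s t ([] @ ([Edge t t'] @ D t' (takeWhile P g0)) @ (D t' (dropWhile P g0) @ S))
                    ([] @ (D t (takeWhile P g0) @ [Edge t t']) @ (D t' (dropWhile P g0) @ S))"
        by (rule zctx'[OF zeq_edge_comm _ py]) (use vt tP in auto)
      moreover have "D t' g0 = D t' (takeWhile P g0) @ D t' (dropWhile P g0)"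
        by (metis D_append takeWhile_dropWhile_id)
      ultimately show ?thesis using e1 N Edge vt by (simp add: nfword_def S_def)
    qed
  qed
qed

lemma valid_empty: "valid s ([], [])" by (simp add: valid_def gword_def)

lemma nf_exists: "zpath s t w \<Longrightarrow> zeq s t w (nfword t (act w ([], [])))"
proof (induction w arbitrary: t)
  case Nil
  then show ?case by (auto simp: nfword_def intro: zeq.zrefl)
next
  case (Cons l w)
  then obtain m where m: "zpath m t [l]" "zpath s m w" using zpath_append[of s t "[l]" w] by auto
  define N where "N = act w ([], [])"
  have ih: "zeq s m w (nfword m N)" using Cons.IH m N_def by blast
  have vN: "valid m N" using valid_act[OF m(2) valid_empty] N_def by simp
  have pN: "zpath s m (nfword m N)" using zeq_zpath[OF ih] by simp
  have 1: "zeq s t ([l] @ w @ []) ([l] @ nfword m N @ [])"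
    by (rule zctx'[OF ih m(1)]) (use zpath_ge2[OF m(2)] in auto)
  have 2: "zeq s t (l # nfword m N) (nfword t (act_letter l N))" using nf_letter[OF vN pN m(1)] .
  show ?case using 1 2 N_def by (auto intro: zeq.ztrans)
qed

lemma foldr_cr_snoc:
  "reduced g \<Longrightarrow> foldr cr g [x] = (if g \<noteq> [] \<and> last g = ginv x then butlast g else g @ [x])"
proof (induction g rule: reduced.induct)
  case 1 then show ?case by simp
next
  case (2 p) then show ?case by (auto simp: ginv_def)
next
  case (3 p q g)
  then have ih: "foldr cr (q # g) [x] = (if last (q # g) = ginv x then butlast (q # g) else q # g @ [x])"
    and pq: "q \<noteq> ginv p" by auto
  show ?case
  proof (cases "last (q # g) = ginv x")
    case True
    then show ?thesis using ih pq by (cases g) auto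
  next
    case False
    then show ?thesis using ih pq by auto
  qed
qed

lemma commute_hd:
  assumes "reduced g" "foldr cr g [x] = cr x g" "g \<noteq> []"
  shows "fst (hd g) = fst x"
proof (cases "hd g = ginv x")
  case True then show ?thesis by simp
next
  case False
  then have c: "cr x g = x # g" using assms(3) by (cases g) auto
  show ?thesis
  proof (cases "last g = ginv x")
    case True
    then have "butlast g = x # g" using foldr_cr_snoc[OF assms(1), of x] assms(2,3) c by simp
    then have "length (butlast g) = Suc (length g)" by simp
    then show ?thesis by simp
  next
    case False
    then have "g @ [x] = x # g" using foldr_cr_snoc[OF assms(1), of x] assms(2,3) c by simp
    then have "hd (g @ [x]) = x" by simp
    then show ?thesis using assms(3) by simp
  qed
qed

lemma length_act_letter: "length (snd (act_letter (Edge a b) N)) \<le> Suc (length (snd N))"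
  by (cases N) auto

lemma length_act_segword: "length (snd (act (segword t segs) N)) \<le> length (snd N) + length segs"
proof (induction segs arbitrary: t)
  case (Cons p segs)
  obtain v g where p: "p = (v, g)" by force
  obtain h s where hs: "act (segword v segs) N = (h, s)" by force
  have "length s \<le> length (snd N) + length segs" using Cons.IH[of v] hs by simp
  moreover have "length (snd (act_letter (Edge t v) (foldr cr g h, s))) \<le> Suc (length s)"
    using length_act_letter[of t v "(foldr cr g h, s)"] by simp
  ultimately show ?case using p hs by (simp add: act_D)
qed simp

fun chain :: "'o::wellorder \<Rightarrow> 'o \<Rightarrow> ('o \<times> ('o \<times> bool) list) list \<Rightarrow> bool" where
  "chain j t [] = True"
| "chain j t ((v, g) # rest) = (g = [] \<and> j < min t v \<and> chain j v rest)"

lemma analysis: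
  "vs t segs \<Longrightarrow> act (segword t segs) ([(j, True)], []) = (h, segs) \<Longrightarrow> h = [(j, True)] \<and> chain j t segs"
proof (induction segs arbitrary: t h)
  case Nil then show ?case by simp
next
  case (Cons p rest)
  obtain v g where p: "p = (v, g)" by force
  define x where "x = (j, True)"
  obtain h1 s1 where hs: "act (segword v rest) ([x], []) = (h1, s1)" by force
  have len: "length s1 \<le> length rest" using length_act_segword[of v rest "([x], [])"] hs by simp
  define c where "c = foldr cr g h1"
  define P where "P = (\<lambda>q::'a \<times> bool. fst q < min t v)"
  have vg: "reduced g" "g \<noteq> [] \<longrightarrow> min t v \<le> fst (hd g)" "vs v rest" using Cons.prems p by auto
  have eq: "act_letter (Edge t v) (c, s1) = (h, (v, g) # rest)"
    using Cons.prems(2) p hs by (simp add: act_D c_def x_def)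
  have nc: "\<not> (dropWhile P c = [] \<and> s1 \<noteq> [] \<and> fst (hd s1) = t)"
  proof
    assume "dropWhile P c = [] \<and> s1 \<noteq> [] \<and> fst (hd s1) = t"
    then have "act_letter (Edge t v) (c, s1) = (c @ snd (hd s1), tl s1)" by (simp add: P_def)
    then have "tl s1 = (v, g) # rest" using eq by simp
    then have "length (tl s1) = Suc (length rest)" by simp
    then show False using len by simp
  qed
  then have "act_letter (Edge t v) (c, s1) = (takeWhile P c, (v, dropWhile P c) # s1)"
    by (auto simp: P_def)
  then have tw: "takeWhile P c = h" and dw: "dropWhile P c = g" and s1: "s1 = rest" using eq by auto
  have ih: "h1 = [x] \<and> chain j v rest" using Cons.IH[OF vg(3)] hs s1 x_def by simp
  then have c: "c = foldr cr g [x]" by (simp add: c_def)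
  have hg: "h @ g = c" using tw dw takeWhile_dropWhile_id by metis
  show ?case
  proof (cases "g = []")
    case True
    then have "c = [x]" using c by simp
    then have "P x" using dw True by (cases "P x") auto
    then show ?thesis using tw True p ih \<open>c = [x]\<close> by (simp add: x_def P_def)
  next
    case False
    have nP: "\<not> P (hd g)" using vg(2) False by (simp add: P_def not_less min_le_iff_disj)
    show ?thesis
    proof (cases "last g = ginv x")
      case True
      then have "c = butlast g" using c foldr_cr_snoc[OF vg(1)] False by simp
      then have "length (h @ g) < length g" using hg False by simp
      then show ?thesis by simp
    next
      case lF: False
      then have "c = g @ [x]" using c foldr_cr_snoc[OF vg(1)] False by simp
      then have "\<not> P (hd c)" using nP False by simp
      moreover have "c \<noteq> []" using \<open>c = g @ [x]\<close> by simp
      ultimately have "dropWhile P c = c" by (cases c) auto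
      then show ?thesis using dw \<open>c = g @ [x]\<close> by simp
    qed
  qed
qed

fun good :: "'o::wellorder \<Rightarrow> 'o \<Rightarrow> ('o \<times> ('o \<times> bool) list) list \<Rightarrow> bool" where
  "good c t [] = True"
| "good c t ((v, g) # rest) = (g = [] \<and> c \<le> t \<and> c \<le> v \<and> good c v rest)"

lemma chains_good:
  assumes "\<forall>j<c. chain j t segs" "j0 < c"
  shows "good c t segs"
  using assms(1)
proof (induction segs arbitrary: t)
  case (Cons p rest)
  obtain v g where p: "p = (v, g)" by force
  have all: "\<forall>j<c. j < t \<and> j < v" using Cons.prems p by auto
  have "c \<le> t" using all by (metis not_le order.irrefl)
  moreover have "c \<le> v" using all by (metis not_le order.irrefl)
  moreover have "g = []" using Cons.prems p assms(2) by auto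
  moreover have "good c v rest" using Cons.IH Cons.prems p by auto
  ultimately show ?case using p by simp
qed simp

lemma good_edge_word: "good c t segs \<Longrightarrow> edge_word (segword t segs)"
  by (induction t segs rule: segword.induct) (auto simp: edge_word_def)

lemma good_edges: "good c t segs \<Longrightarrow> Edge a b \<in> set (segword t segs) \<Longrightarrow> c \<le> a \<and> c \<le> b"
  by (induction t segs rule: segword.induct) auto

lemma freely_reduced_Cons:
  "freely_reduced (a # w) \<longleftrightarrow> (w = [] \<or> a \<noteq> zinv_letter (hd w)) \<and> freely_reduced w"
  unfolding freely_reduced_def
  apply (cases w)
   apply simp
  apply (auto simp: nth_Cons split: nat.splits)
  done

lemma good_freely_reduced: "good c t segs \<Longrightarrow> vs t segs \<Longrightarrow> freely_reduced (segword t segs)"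
proof (induction t segs rule: segword.induct)
  case (1 t) then show ?case by (simp add: freely_reduced_def)
next
  case (2 t v g rest)
  then show ?case by (cases rest) (auto simp: freely_reduced_Cons)
qed

lemma fwd:
  assumes "zpath \<beta> \<alpha> w" "edge_word w" "\<forall>a b. Edge a b \<in> set w \<longrightarrow> c \<le> a \<and> c \<le> b"
    "c \<le> \<alpha>" "gword c a"
  shows "zeq \<alpha> \<alpha> (D \<alpha> a) (w @ D \<beta> a @ zinv w)"
  using assms
proof (induction w arbitrary: \<alpha>)
  case Nil
  then have "\<alpha> = \<beta>" "ge2 \<alpha>" by auto
  moreover have "gword \<alpha> a" using Nil by (auto simp: gword_def)
  ultimately show ?case by (auto intro: zeq.zrefl simp: zpath_D1)
next
  case (Cons l w)
  obtain t s where l: "l = Edge t s" using Cons.prems(2) by (auto simp: edge_word_def)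
  have ts: "t = \<alpha>" "ge2 \<alpha>" "ge2 s" "s \<noteq> \<alpha>" "zpath \<beta> s w" using Cons.prems(1) l by auto
  have cs: "c \<le> s" using Cons.prems(3) l by auto
  have ih: "zeq s s (D s a) (w @ D \<beta> a @ zinv w)"
    using Cons.IH[OF ts(5) _ _ cs Cons.prems(5)] Cons.prems(2,3) by (auto simp: edge_word_def)
  have ga: "gword (min \<alpha> s) a" using Cons.prems(4,5) cs by (auto simp: gword_def)
  have 1: "zeq \<alpha> \<alpha> ([Edge \<alpha> s] @ D s a @ [Edge s \<alpha>]) ([Edge \<alpha> s] @ (w @ D \<beta> a @ zinv w) @ [Edge s \<alpha>])"
    by (rule zctx'[OF ih, where x="[Edge \<alpha> s]" and y="[Edge s \<alpha>]"]) (use ts in auto)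
  have 2: "zeq \<alpha> \<alpha> ([Edge \<alpha> s] @ D s a @ [Edge s \<alpha>]) (D \<alpha> a)"
    using ts ga by (intro zeq.zedge) auto
  show ?case using 1 2 l ts by (auto simp: zinv_Cons intro: zeq.ztrans zeq.zsym)
qed

theorem lemma3p11:
  fixes \<alpha> \<beta> \<gamma> :: "'o::wellorder" and u :: "'o zletter list"
  assumes "uncountable_cofinality (UNIV :: 'o set)"
    and "ge2 \<alpha>" and "ge2 \<beta>"
    and "zpath \<beta> \<alpha> u"
    and "ge2 \<gamma>" and "\<gamma> \<le> min \<alpha> \<beta>"
  shows "(\<exists>w. edge_word w \<and> freely_reduced w \<and> zpath \<beta> \<alpha> w \<and> zeq \<beta> \<alpha> u w
             \<and> (\<forall>d. passes_through \<alpha> w d \<longrightarrow> \<gamma> \<le> d))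
         \<longleftrightarrow> (\<forall>a. gword \<gamma> a \<longrightarrow> zeq \<alpha> \<alpha> (D \<alpha> a) (u @ D \<beta> a @ zinv u))"
proof
  assume "\<exists>w. edge_word w \<and> freely_reduced w \<and> zpath \<beta> \<alpha> w \<and> zeq \<beta> \<alpha> u w
             \<and> (\<forall>d. passes_through \<alpha> w d \<longrightarrow> \<gamma> \<le> d)"
  then obtain w where w: "edge_word w" "zpath \<beta> \<alpha> w" "zeq \<beta> \<alpha> u w"
    "\<forall>d. passes_through \<alpha> w d \<longrightarrow> \<gamma> \<le> d" by blast
  have ed: "\<forall>a b. Edge a b \<in> set w \<longrightarrow> \<gamma> \<le> a \<and> \<gamma> \<le> b"
    using w(4) unfolding passes_through_def by blast
  show "\<forall>a. gword \<gamma> a \<longrightarrow> zeq \<alpha> \<alpha> (D \<alpha> a) (u @ D \<beta> a @ zinv u)"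
  proof (intro allI impI)
    fix a assume a: "gword \<gamma> a"
    have ga: "gword \<beta> a" using a assms(6) by (auto simp: gword_def)
    have 1: "zeq \<alpha> \<alpha> (D \<alpha> a) (w @ D \<beta> a @ zinv w)"
      using fwd[OF w(2) w(1) ed _ a] assms(6) by simp
    have ui: "zeq \<alpha> \<beta> (zinv u) (zinv w)" using zeq_zinv[OF w(3)] .
    have pu: "zpath \<alpha> \<beta> (zinv u)" "zpath \<alpha> \<beta> (zinv w)" using zeq_zpath[OF ui] by auto
    have 2: "zeq \<alpha> \<alpha> ([] @ u @ (D \<beta> a @ zinv u)) ([] @ w @ (D \<beta> a @ zinv u))"
      by (rule zctx'[OF w(3), where x="[]" and y="D \<beta> a @ zinv u"]) (use pu ga assms in \<open>auto simp: zpath_D\<close>)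
    have 3: "zeq \<alpha> \<alpha> ((w @ D \<beta> a) @ zinv u @ []) ((w @ D \<beta> a) @ zinv w @ [])"
      by (rule zctx'[OF ui, where x="w @ D \<beta> a" and y="[]"]) (use w(2) ga assms in \<open>auto simp: zpath_append zpath_D1\<close>)
    show "zeq \<alpha> \<alpha> (D \<alpha> a) (u @ D \<beta> a @ zinv u)"
    proof -
      have "zeq \<alpha> \<alpha> (u @ D \<beta> a @ zinv u) (w @ D \<beta> a @ zinv w)"
        using 2 3 zeq.ztrans by simp blast
      then show ?thesis using 1 zeq.ztrans zeq.zsym by blast
    qed
  qed
next
  assume H: "\<forall>a. gword \<gamma> a \<longrightarrow> zeq \<alpha> \<alpha> (D \<alpha> a) (u @ D \<beta> a @ zinv u)"
  define M where "M = act u ([], [])"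
  obtain g0 segs where M: "M = (g0, segs)" by force
  have vM: "valid \<alpha> M" using valid_act[OF assms(4) valid_empty] M_def by simp
  have nfu: "zeq \<beta> \<alpha> u (nfword \<alpha> M)" using nf_exists[OF assms(4)] M_def by simp
  have key: "foldr cr g0 [(j, True)] = cr (j, True) g0 \<and> chain j \<alpha> segs" if j: "j < \<gamma>" for j
  proof -
    define x where "x = (j, True)"
    have gx: "gword \<gamma> [x]" using j by (simp add: gword_def x_def)
    have z: "zeq \<alpha> \<alpha> (D \<alpha> [x]) (u @ D \<beta> [x] @ zinv u)" using H gx by blast
    have A: "act (D \<alpha> [x]) M = act u (act (D \<beta> [x]) (act (zinv u) M))"
      using zeq_act[OF z vM] by simp
    have "act (zinv u) M = act (zinv u @ u) ([], [])" by (simp add: M_def)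
    also have "\<dots> = act [] ([], [])" using zeq_act[OF zeq_inv_cancel[OF assms(4)] valid_empty] .
    finally have B: "act (zinv u) M = ([], [])" by simp
    have vx: "valid \<beta> ([x], [])" using j assms(6) by (auto simp: valid_def gword_def x_def intro: less_le_trans)
    have C: "act u ([x], []) = act (nfword \<alpha> M) ([x], [])" using zeq_act[OF nfu vx] .
    obtain h s' where hs: "act (segword \<alpha> segs) ([x], []) = (h, s')" by force
    have "(cr x g0, segs) = (foldr cr g0 h, s')"
      using A B C hs M by (simp add: act_D nfword_def)
    then have "s' = segs" "foldr cr g0 h = cr x g0" by auto
    moreover have vs: "vs \<alpha> segs" using vM M by (simp add: valid_def)
    ultimately have "h = [x] \<and> chain j \<alpha> segs" using analysis[OF vs] hs x_def by simp
    then show ?thesis using \<open>foldr cr g0 h = cr x g0\<close> x_def by simp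
  qed
  obtain j0 j1 where j01: "j0 < j1" "j1 < \<gamma>" using assms(5) unfolding ge2_def by blast
  have rg0: "reduced g0" using vM M by (simp add: valid_def)
  have g0: "g0 = []"
  proof (rule ccontr)
    assume ne: "g0 \<noteq> []"
    have "fst (hd g0) = j0" using commute_hd[OF rg0 _ ne, of "(j0, True)"] key[of j0] j01 by simp
    moreover have "fst (hd g0) = j1" using commute_hd[OF rg0 _ ne, of "(j1, True)"] key[of j1] j01 by simp
    ultimately show False using j01 by simp
  qed
  have good: "good \<gamma> \<alpha> segs" using chains_good[of \<gamma> \<alpha> segs j0] key j01 by auto
  have vs: "vs \<alpha> segs" using vM M by (simp add: valid_def)
  define w where "w = segword \<alpha> segs"
  have nw: "nfword \<alpha> M = w" using M g0 by (simp add: nfword_def w_def)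
  show "\<exists>w. edge_word w \<and> freely_reduced w \<and> zpath \<beta> \<alpha> w \<and> zeq \<beta> \<alpha> u w
             \<and> (\<forall>d. passes_through \<alpha> w d \<longrightarrow> \<gamma> \<le> d)"
  proof (intro exI conjI allI impI)
    show "edge_word w" using good_edge_word[OF good] w_def by simp
    show "freely_reduced w" using good_freely_reduced[OF good vs] w_def by simp
    show "zeq \<beta> \<alpha> u w" using nfu nw by simp
    then show "zpath \<beta> \<alpha> w" using zeq_zpath by blast
    fix d assume "passes_through \<alpha> w d"
    then show "\<gamma> \<le> d" using good_edges[OF good] assms(6) unfolding passes_through_def w_def by auto
  qed
qed

end
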